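(* Let $X$ be a finite set with similarity function $S$, suppose the target clustering $\mathcal{C}^{\ast}$ satisfies stability with respect to $S$, and let $\eta>0.5$. Consider the interactive process in the $\eta$-merge model with the global split and merge procedures described below. Then (a) every split performed by the split procedure is clean, and (b) every new cluster added (and labelled "pure") by the merge procedure contains points from a single target cluster.
   Context: For nonempty $A,A'\subseteq X$ let $S(A,A')$ be the average of $S(x,y)$ over $x\in A,y\in A'$. $\mathcal{C}^{\ast}=\{C^{\ast}_1,\dots,C^{\ast}_k\}$ satisfies stability w.r.t. $S$ if for all $i\neq j$, every nonempty proper $A\subset C^{\ast}_i$ and nonempty $A'\subseteq C^{\ast}_j$: $S(A,C^{\ast}_i\setminus A)>S(A,A')$. A split of a cluster $C_i$ into $C_{i,1},C_{i,2}$ is clean if both are nonempty and for each target cluster $C^{\ast}_j$ meeting $C_i$, either $C^{\ast}_j\cap C_i=C^{\ast}_j\cap C_{i,1}$ or $C^{\ast}_j\cap C_i=C^{\ast}_j\cap C_{i,2}$. Average-linkage tree $T_{glob}$: start with singletons as leaves; repeatedly merge the two current nodes $N_1,N_2$ with largest $S(N_1,N_2)$ (ties arbitrary) into parent $N_1\cup N_2$ until the root $X$ remains; nodes are identified with point sets. Process: start from an initial clustering of $X$, all clusters labelled "impure". An oracle repeatedly issues split$(C_i)$ (only if current cluster $C_i$ contains points of two or more target clusters) or merge$(C_i,C_j)$ (only if some target cluster $C^{\ast}_l$ has $|C_i\cap C^{\ast}_l|\ge\eta|C_i|$ and $|C_j\cap C^{\ast}_l|\ge\eta|C_j|$). Split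 procedure: let $N$ be the deepest node of $T_{glob}$ containing $C_i$, with children $N_1,N_2$; replace $C_i$ by $C_i\cap N_1$ and $C_i\cap N_2$, labelled "impure". Merge procedure: $\eta_1=1$ if $C_i$ is labelled "pure", else $\eta_1=\eta$; $\eta_2$ likewise for $C_j$. Find a node $N$ of $T_{glob}$ of maximal depth with $|N\cap C_i|\ge\eta_1|C_i|$ and $|N\cap C_j|\ge\eta_2|C_j|$; replace $C_i$ by $C_i\setminus N$, $C_j$ by $C_j\setminus N$ (labels kept, empty clusters discarded), and add the new cluster $N\cap(C_i\cup C_j)$ labelled "pure". *)

theory Defs
  imports Complex_Main
begin

definition avgS :: "('a \<Rightarrow> 'a \<Rightarrow> real) \<Rightarrow> 'a set \<Rightarrow> 'a set \<Rightarrow> real" where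
  "avgS S A B = (\<Sum>x\<in>A. \<Sum>y\<in>B. S x y) / (real (card A) * real (card B))"

definition is_partition :: "'a set \<Rightarrow> 'a set set \<Rightarrow> bool" where
  "is_partition X P \<longleftrightarrow> \<Union>P = X \<and> {} \<notin> P \<and> (\<forall>A\<in>P. \<forall>B\<in>P. A \<noteq> B \<longrightarrow> A \<inter> B = {})"

definition stable :: "('a \<Rightarrow> 'a \<Rightarrow> real) \<Rightarrow> 'a set set \<Rightarrow> bool" where
  "stable S Ct \<longleftrightarrow> (\<forall>Ci\<in>Ct. \<forall>Cj\<in>Ct. Ci \<noteq> Cj \<longrightarrow>
      (\<forall>A A'. A \<noteq> {} \<and> A \<subset> Ci \<and> A' \<noteq> {} \<and> A' \<subseteq> Cj \<longrightarrow>
         avgS S A (Ci - A) > avgS S A A'))"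

definition clean_split :: "'a set set \<Rightarrow> 'a set \<Rightarrow> 'a set \<Rightarrow> 'a set \<Rightarrow> bool" where
  "clean_split Ct C C1 C2 \<longleftrightarrow> C1 \<noteq> {} \<and> C2 \<noteq> {} \<and>
     (\<forall>T\<in>Ct. T \<inter> C \<noteq> {} \<longrightarrow> T \<inter> C = T \<inter> C1 \<or> T \<inter> C = T \<inter> C2)"

text \<open>A run of average linkage is a list of merges (N1,N2): at each step N1, N2 are two
  distinct current nodes maximising the average similarity (ties arbitrary).\<close>

definition avl_merge_ok :: "('a \<Rightarrow> 'a \<Rightarrow> real) \<Rightarrow> 'a set set \<Rightarrow> 'a set \<Rightarrow> 'a set \<Rightarrow> bool" where
  "avl_merge_ok S P N1 N2 \<longleftrightarrow> N1 \<in> P \<and> N2 \<in> P \<and> N1 \<noteq> N2 \<and>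
     (\<forall>M1\<in>P. \<forall>M2\<in>P. M1 \<noteq> M2 \<longrightarrow> avgS S M1 M2 \<le> avgS S N1 N2)"

fun avl_run :: "('a \<Rightarrow> 'a \<Rightarrow> real) \<Rightarrow> 'a set set \<Rightarrow> ('a set \<times> 'a set) list \<Rightarrow> 'a set set \<Rightarrow> bool" where
  "avl_run S P [] Q \<longleftrightarrow> P = Q"
| "avl_run S P ((N1, N2) # ms) Q \<longleftrightarrow>
     avl_merge_ok S P N1 N2 \<and> avl_run S (insert (N1 \<union> N2) (P - {N1, N2})) ms Q"

definition avg_linkage_tree :: "('a \<Rightarrow> 'a \<Rightarrow> real) \<Rightarrow> 'a set \<Rightarrow> ('a set \<times> 'a set) list \<Rightarrow> bool" where
  "avg_linkage_tree S X ms \<longleftrightarrow> avl_run S ((\<lambda>x. {x}) ` X) ms {X}"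

definition tree_nodes :: "'a set \<Rightarrow> ('a set \<times> 'a set) list \<Rightarrow> 'a set set" where
  "tree_nodes X ms = (\<lambda>x. {x}) ` X \<union> (\<lambda>(A, B). A \<union> B) ` set ms"

definition tree_depth :: "'a set \<Rightarrow> ('a set \<times> 'a set) list \<Rightarrow> 'a set \<Rightarrow> nat" where
  "tree_depth X ms N = card {M \<in> tree_nodes X ms. N \<subset> M}"

definition tree_children :: "('a set \<times> 'a set) list \<Rightarrow> 'a set \<Rightarrow> 'a set \<Rightarrow> 'a set \<Rightarrow> bool" where
  "tree_children ms N N1 N2 \<longleftrightarrow> (N1, N2) \<in> set ms \<and> N1 \<union> N2 = N"

definition deepest_node_containing :: "'a set \<Rightarrow> ('a set \<times> 'a set) list \<Rightarrow> 'a set \<Rightarrow> 'a set \<Rightarrow> bool" where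
  "deepest_node_containing X ms C N \<longleftrightarrow> N \<in> tree_nodes X ms \<and> C \<subseteq> N \<and>
     (\<forall>M\<in>tree_nodes X ms. C \<subseteq> M \<longrightarrow> tree_depth X ms M \<le> tree_depth X ms N)"

text \<open>State: current clusters Cs and the subset Pu of clusters labelled "pure"
  (all others are labelled "impure").\<close>

definition split_step ::
  "'a set \<Rightarrow> ('a set \<times> 'a set) list \<Rightarrow> 'a set set \<Rightarrow>
   'a set set \<Rightarrow> 'a set set \<Rightarrow> 'a set \<Rightarrow> 'a set \<Rightarrow> 'a set \<Rightarrow> 'a set set \<Rightarrow> 'a set set \<Rightarrow> bool" where
  "split_step X ms Ct Cs Pu C N1 N2 Cs' Pu' \<longleftrightarrow>
     C \<in> Cs \<and>
     (\<exists>T1\<in>Ct. \<exists>T2\<in>Ct. T1 \<noteq> T2 \<and> T1 \<inter> C \<noteq> {} \<and> T2 \<inter> C \<noteq> {}) \<and>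
     (\<exists>N. deepest_node_containing X ms C N \<and> tree_children ms N N1 N2) \<and>
     Cs' = insert (C \<inter> N1) (insert (C \<inter> N2) (Cs - {C})) \<and>
     Pu' = Pu - {C, C \<inter> N1, C \<inter> N2}"

definition merge_node_ok ::
  "'a set \<Rightarrow> ('a set \<times> 'a set) list \<Rightarrow> real \<Rightarrow> 'a set set \<Rightarrow> 'a set \<Rightarrow> 'a set \<Rightarrow> 'a set \<Rightarrow> bool" where
  "merge_node_ok X ms \<eta> Pu Ci Cj N \<longleftrightarrow>
     N \<in> tree_nodes X ms \<and>
     real (card (N \<inter> Ci)) \<ge> (if Ci \<in> Pu then 1 else \<eta>) * real (card Ci) \<and>
     real (card (N \<inter> Cj)) \<ge> (if Cj \<in> Pu then 1 else \<eta>) * real (card Cj)"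

definition merge_step ::
  "'a set \<Rightarrow> ('a set \<times> 'a set) list \<Rightarrow> 'a set set \<Rightarrow> real \<Rightarrow>
   'a set set \<Rightarrow> 'a set set \<Rightarrow> 'a set \<Rightarrow> 'a set \<Rightarrow> 'a set \<Rightarrow> 'a set set \<Rightarrow> 'a set set \<Rightarrow> bool" where
  "merge_step X ms Ct \<eta> Cs Pu Ci Cj N Cs' Pu' \<longleftrightarrow>
     Ci \<in> Cs \<and> Cj \<in> Cs \<and> Ci \<noteq> Cj \<and>
     (\<exists>T\<in>Ct. real (card (Ci \<inter> T)) \<ge> \<eta> * real (card Ci) \<and>
             real (card (Cj \<inter> T)) \<ge> \<eta> * real (card Cj)) \<and>
     merge_node_ok X ms \<eta> Pu Ci Cj N \<and>
     (\<forall>M. merge_node_ok X ms \<eta> Pu Ci Cj M \<longrightarrow> tree_depth X ms M \<le> tree_depth X ms N) \<and>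
     Cs' = (Cs - {Ci, Cj}) \<union> ({Ci - N, Cj - N} - {{}}) \<union> {N \<inter> (Ci \<union> Cj)} \<and>
     Pu' = (Pu - {Ci, Cj}) \<union>
           {D. D \<noteq> {} \<and> ((D = Ci - N \<and> Ci \<in> Pu) \<or> (D = Cj - N \<and> Cj \<in> Pu))} \<union>
           {N \<inter> (Ci \<union> Cj)}"

definition proc_step ::
  "'a set \<Rightarrow> ('a set \<times> 'a set) list \<Rightarrow> 'a set set \<Rightarrow> real \<Rightarrow>
   'a set set \<times> 'a set set \<Rightarrow> 'a set set \<times> 'a set set \<Rightarrow> bool" where
  "proc_step X ms Ct \<eta> st st' \<longleftrightarrow>
     (\<exists>C N1 N2. split_step X ms Ct (fst st) (snd st) C N1 N2 (fst st') (snd st')) \<or>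
     (\<exists>Ci Cj N. merge_step X ms Ct \<eta> (fst st) (snd st) Ci Cj N (fst st') (snd st'))"

end

theory Submission
imports Defs
begin

definition lam :: "'a set set \<Rightarrow> 'a set \<Rightarrow> bool" where
  "lam Ct N \<longleftrightarrow> (\<exists>T\<in>Ct. N \<subseteq> T) \<or> (\<forall>T\<in>Ct. T \<inter> N \<noteq> {} \<longrightarrow> T \<subseteq> N)"

lemma part_eq: "is_partition X P \<Longrightarrow> A \<in> P \<Longrightarrow> B \<in> P \<Longrightarrow> A \<inter> B \<noteq> {} \<Longrightarrow> A = B"
  unfolding is_partition_def by blast

lemma part_sub: "is_partition X P \<Longrightarrow> A \<in> P \<Longrightarrow> A \<subseteq> X"
  unfolding is_partition_def by blast

lemma part_ne: "is_partition X P \<Longrightarrow> A \<in> P \<Longrightarrow> A \<noteq> {}"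
  unfolding is_partition_def by blast

lemma part_cover: "is_partition X P \<Longrightarrow> x \<in> X \<Longrightarrow> \<exists>A\<in>P. x \<in> A"
  unfolding is_partition_def by blast

lemma lam_meet:
  assumes "lam Ct M" "is_partition X Ct" "T \<in> Ct" "T \<inter> M \<noteq> {}" "\<not> T \<subseteq> M"
  shows "M \<subseteq> T"
proof -
  from assms(1,5) obtain T' where T': "T' \<in> Ct" "M \<subseteq> T'" unfolding lam_def using assms(3,4) by blast
  have "T' \<inter> T \<noteq> {}" using T'(2) assms(4) by blast
  then have "T' = T" by (rule part_eq[OF assms(2) T'(1) assms(3)])
  then show ?thesis using T' by simp
qed

lemma avgS_swap: "avgS S A B = (\<Sum>y\<in>B. \<Sum>x\<in>A. S x y) / (real (card A) * real (card B))"
  unfolding avgS_def by (simp add: sum.swap[of _ A B])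

lemma avgS_sym: "\<forall>x\<in>X. \<forall>y\<in>X. S x y = S y x \<Longrightarrow> A \<subseteq> X \<Longrightarrow> B \<subseteq> X \<Longrightarrow> avgS S A B = avgS S B A"
proof -
  assume s: "\<forall>x\<in>X. \<forall>y\<in>X. S x y = S y x" and a: "A \<subseteq> X" and b: "B \<subseteq> X"
  have "(\<Sum>y\<in>B. \<Sum>x\<in>A. S x y) = (\<Sum>y\<in>B. \<Sum>x\<in>A. S y x)"
    using s a b by (intro sum.cong refl) (auto)
  moreover have "(\<Sum>x\<in>A. \<Sum>y\<in>B. S x y) = (\<Sum>y\<in>B. \<Sum>x\<in>A. S x y)" by (rule sum.swap)
  ultimately show ?thesis unfolding avgS_def by (simp add: mult.commute)
qed


lemma avgS_alt: "avgS S A B = (\<Sum>y\<in>B. (\<Sum>x\<in>A. S x y)) / (real (card A) * real (card B))"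
  by (rule avgS_swap)

lemma stableD: "stable S Ct \<Longrightarrow> Ci \<in> Ct \<Longrightarrow> Cj \<in> Ct \<Longrightarrow> Ci \<noteq> Cj \<Longrightarrow> A \<noteq> {} \<Longrightarrow> A \<subset> Ci
  \<Longrightarrow> A' \<noteq> {} \<Longrightarrow> A' \<subseteq> Cj \<Longrightarrow> avgS S A (Ci - A) > avgS S A A'"
  unfolding stable_def by blast

lemma key:
  assumes fX: "finite X" and Ctp: "is_partition X Ct" and st: "stable S Ct"
    and T: "T \<in> Ct" and N1T: "N1 \<subset> T" and N1ne: "N1 \<noteq> {}" and N2ne: "N2 \<noteq> {}"
    and N2X: "N2 \<subseteq> X" and N2T: "N2 \<inter> T = {}"
    and N1P: "N1 \<in> P" and Pp: "is_partition X P" and lamP: "\<forall>A\<in>P. lam Ct A"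
  shows "\<exists>M\<in>P. M \<noteq> N1 \<and> avgS S N1 M > avgS S N1 N2"
proof (rule ccontr)
  assume H: "\<not> ?thesis"
  define g where "g y = (\<Sum>x\<in>N1. S x y)" for y
  define a where "a = real (card N1)"
  define R where "R = T - N1"
  have TX: "T \<subseteq> X" using part_sub[OF Ctp T] .
  have fT: "finite T" using finite_subset[OF TX fX] .
  have fN1: "finite N1" using finite_subset[OF _ fT] N1T by blast
  have apos: "a > 0" unfolding a_def using fN1 N1ne by (simp add: card_gt_0_iff)
  have Rne: "R \<noteq> {}" unfolding R_def using N1T by blast
  have fR: "finite R" unfolding R_def using fT by simp
  have cRpos: "real (card R) > 0" using fR Rne by (simp add: card_gt_0_iff)
  have fN2: "finite N2" using finite_subset[OF N2X fX] .
  have cN2pos: "real (card N2) > 0" using fN2 N2ne by (simp add: card_gt_0_iff)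
  define c where "c = avgS S N1 R"
  have avg: "avgS S N1 B = (\<Sum>y\<in>B. g y) / (a * real (card B))" for B
    unfolding avgS_alt g_def a_def ..
  have sumR: "(\<Sum>y\<in>R. g y) = c * a * real (card R)"
    unfolding c_def avg using apos cRpos by simp
  have gy: "g y < c * a" if y: "y \<in> N2" for y
  proof -
    obtain T' where T': "T' \<in> Ct" "y \<in> T'" using part_cover[OF Ctp] y N2X by blast
    have "T' \<noteq> T" using T' y N2T by blast
    moreover have "{y} \<noteq> {}" "{y} \<subseteq> T'" using T' by auto
    ultimately have "avgS S N1 (T - N1) > avgS S N1 {y}"
      using stableD[OF st T T'(1)] N1T N1ne by blast
    moreover have "avgS S N1 {y} = g y / a" using avg[of "{y}"] by simp
    ultimately have "g y / a < c" unfolding c_def R_def by simp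
    then show ?thesis using apos by (simp add: divide_less_eq mult.commute)
  qed
  define d where "d = avgS S N1 N2"
  have "(\<Sum>y\<in>N2. g y) < (\<Sum>y\<in>N2. c * a)"
    by (rule sum_strict_mono[OF fN2 N2ne]) (rule gy)
  then have "(\<Sum>y\<in>N2. g y) < c * a * real (card N2)" by (simp add: mult.commute)
  then have "(\<Sum>y\<in>N2. g y) < c * (a * real (card N2))" by (simp add: mult.assoc)
  moreover have p2: "0 < a * real (card N2)" using apos cN2pos by simp
  ultimately have "(\<Sum>y\<in>N2. g y) / (a * real (card N2)) < c" by (simp add: pos_divide_less_eq[OF p2])
  then have dc: "d < c" unfolding d_def avg .
  define F where "F = {M\<in>P. M \<subseteq> R}"
  have UF: "\<Union>F = R"
  proof
    show "\<Union>F \<subseteq> R" unfolding F_def by blast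
    show "R \<subseteq> \<Union>F"
    proof
      fix y assume yR: "y \<in> R"
      have yT: "y \<in> T" "y \<notin> N1" using yR unfolding R_def by auto
      have yX: "y \<in> X" using yT TX by blast
      obtain M where M: "M \<in> P" "y \<in> M" using part_cover[OF Pp yX] by blast
      have MN1: "M \<noteq> N1" using M yT by blast
      have MN1d: "M \<inter> N1 = {}"
      proof (rule ccontr)
        assume "M \<inter> N1 \<noteq> {}"
        then have "M = N1" by (rule part_eq[OF Pp M(1) N1P])
        then show False using MN1 by simp
      qed
      have "M \<subseteq> T"
      proof (rule ccontr)
        assume nMT: "\<not> M \<subseteq> T"
        have TM: "T \<inter> M \<noteq> {}" using M yT by blast
        have lM: "lam Ct M" using lamP M(1) by blast
        have "T \<subseteq> M"
        proof (rule ccontr)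
          assume "\<not> T \<subseteq> M"
          then have "M \<subseteq> T" by (rule lam_meet[OF lM Ctp T TM])
          then show False using nMT by simp
        qed
        then show False using MN1d N1T N1ne by blast
      qed
      then have "M \<subseteq> R" unfolding R_def using MN1d by blast
      then have "M \<in> F" unfolding F_def using M(1) by blast
      then show "y \<in> \<Union>F" using M(2) by blast
    qed
  qed
  have fF: "finite F" unfolding F_def
    by (rule finite_subset[of _ "Pow R"]) (use fR in auto)
  have fM: "\<forall>M\<in>F. finite M" unfolding F_def using finite_subset[OF _ fR] by blast
  have dj: "\<forall>A\<in>F. \<forall>B\<in>F. A \<noteq> B \<longrightarrow> A \<inter> B = {}" unfolding F_def using part_eq[OF Pp]
    by blast
  have le: "(\<Sum>y\<in>M. g y) \<le> d * a * real (card M)" if M: "M \<in> F" for M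
  proof -
    have MP: "M \<in> P" "M \<noteq> N1" using M unfolding F_def R_def using N1ne by auto
    then have "avgS S N1 M \<le> d" using H unfolding d_def by auto
    moreover have "real (card M) > 0" using part_ne[OF Pp MP(1)] fM M by (simp add: card_gt_0_iff)
    then have pM: "0 < a * real (card M)" using apos by simp
    ultimately have "(\<Sum>y\<in>M. g y) \<le> d * (a * real (card M))" unfolding avg by (simp add: pos_divide_le_eq[OF pM])
    then show ?thesis by (simp add: mult.assoc)
  qed
  have "(\<Sum>y\<in>R. g y) = (\<Sum>M\<in>F. \<Sum>y\<in>M. g y)"
    unfolding UF[symmetric] using sum.Union_disjoint[OF fM dj, of g] by (simp add: comp_def)
  also have "\<dots> \<le> (\<Sum>M\<in>F. d * a * real (card M))" using le by (rule sum_mono)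
  also have "\<dots> = d * a * real (\<Sum>M\<in>F. card M)" by (simp add: sum_distrib_left)
  also have "(\<Sum>M\<in>F. card M) = card R"
  proof -
    have "pairwise disjnt F" using dj unfolding pairwise_def disjnt_def by blast
    then have "card (\<Union>F) = (\<Sum>M\<in>F. card M)" using card_Union_disjoint[of F] fM by blast
    then show ?thesis using UF by simp
  qed
  finally have "(\<Sum>y\<in>R. g y) \<le> d * a * real (card R)" .
  then have "c * a * real (card R) \<le> d * a * real (card R)" using sumR by linarith
  then have "c * (a * real (card R)) \<le> d * (a * real (card R))" by (simp add: mult.assoc)
  then have "c \<le> d" using apos cRpos by (meson mult_pos_pos mult_right_le_imp_le)
  then show False using dc by simp
qed


lemma lam_one:
  assumes Ctp: "is_partition X Ct" and lA: "lam Ct A" and lB: "lam Ct B" and d: "A \<inter> B = {}"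
    and Ane: "A \<noteq> {}" and ns: "\<not> (\<forall>T\<in>Ct. T \<inter> A \<noteq> {} \<longrightarrow> T \<subseteq> A)" and nl: "\<not> lam Ct (A \<union> B)"
  shows "\<exists>T\<in>Ct. A \<subset> T \<and> B \<inter> T = {}"
proof -
  obtain T1 where T1: "T1 \<in> Ct" "A \<subseteq> T1" using lA ns unfolding lam_def by blast
  have "A \<noteq> T1"
  proof
    assume AT: "A = T1"
    have "\<forall>T\<in>Ct. T \<inter> A \<noteq> {} \<longrightarrow> T \<subseteq> A"
    proof (intro ballI impI)
      fix T assume "T \<in> Ct" "T \<inter> A \<noteq> {}"
      then have "T = T1" using part_eq[OF Ctp _ T1(1)] AT by blast
      then show "T \<subseteq> A" using AT by simp
    qed
    then show False using ns by blast
  qed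
  then have AT1: "A \<subset> T1" using T1 by blast
  have "B \<inter> T1 = {}"
  proof (rule ccontr)
    assume BT: "B \<inter> T1 \<noteq> {}"
    show False
    proof (cases "\<exists>T2\<in>Ct. B \<subseteq> T2")
      case True
      then obtain T2 where T2: "T2 \<in> Ct" "B \<subseteq> T2" by blast
      have "T2 \<inter> T1 \<noteq> {}" using T2 BT by blast
      then have "T2 = T1" by (rule part_eq[OF Ctp T2(1) T1(1)])
      then have "lam Ct (A \<union> B)" unfolding lam_def using T1 T2 by blast
      then show False using nl by simp
    next
      case False
      then have "T1 \<subseteq> B" using lB BT T1(1) unfolding lam_def by blast
      then show False using T1 d Ane by blast
    qed
  qed
  then show ?thesis using AT1 T1(1) by blast
qed

lemma lam_two:
  assumes Ctp: "is_partition X Ct" and lA: "lam Ct A" and lB: "lam Ct B" and d: "A \<inter> B = {}"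
    and Ane: "A \<noteq> {}" and Bne: "B \<noteq> {}" and nl: "\<not> lam Ct (A \<union> B)"
  shows "(\<exists>T\<in>Ct. A \<subset> T \<and> B \<inter> T = {}) \<or> (\<exists>T\<in>Ct. B \<subset> T \<and> A \<inter> T = {})"
proof (cases "\<forall>T\<in>Ct. T \<inter> A \<noteq> {} \<longrightarrow> T \<subseteq> A")
  case sA: True
  show ?thesis
  proof (cases "\<forall>T\<in>Ct. T \<inter> B \<noteq> {} \<longrightarrow> T \<subseteq> B")
    case True
    then have "lam Ct (A \<union> B)" using sA unfolding lam_def by blast
    then show ?thesis using nl by simp
  next
    case False
    have "\<not> lam Ct (B \<union> A)" using nl by (simp add: Un_commute)
    then show ?thesis using lam_one[OF Ctp lB lA _ Bne False] d by blast
  qed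
next
  case False
  then show ?thesis using lam_one[OF Ctp lA lB d Ane False nl] by blast
qed

lemma merge_lam:
  assumes fX: "finite X" and sym: "\<forall>x\<in>X. \<forall>y\<in>X. S x y = S y x"
    and Ctp: "is_partition X Ct" and st: "stable S Ct"
    and mo: "avl_merge_ok S P N1 N2" and Pp: "is_partition X P" and lamP: "\<forall>A\<in>P. lam Ct A"
  shows "lam Ct (N1 \<union> N2)"
proof (rule ccontr)
  assume nl: "\<not> lam Ct (N1 \<union> N2)"
  have N: "N1 \<in> P" "N2 \<in> P" "N1 \<noteq> N2" and mx: "\<forall>M1\<in>P. \<forall>M2\<in>P. M1 \<noteq> M2 \<longrightarrow> avgS S M1 M2 \<le> avgS S N1 N2"
    using mo unfolding avl_merge_ok_def by auto
  have ne: "N1 \<noteq> {}" "N2 \<noteq> {}" using part_ne[OF Pp] N by auto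
  have sub: "N1 \<subseteq> X" "N2 \<subseteq> X" using part_sub[OF Pp] N by auto
  have d: "N1 \<inter> N2 = {}" using part_eq[OF Pp N(1) N(2)] N(3) by blast
  have l: "lam Ct N1" "lam Ct N2" using lamP N by auto
  have "(\<exists>T\<in>Ct. N1 \<subset> T \<and> N2 \<inter> T = {}) \<or> (\<exists>T\<in>Ct. N2 \<subset> T \<and> N1 \<inter> T = {})"
    by (rule lam_two[OF Ctp l d ne nl])
  then show False
  proof
    assume "\<exists>T\<in>Ct. N1 \<subset> T \<and> N2 \<inter> T = {}"
    then obtain T where T: "T \<in> Ct" "N1 \<subset> T" "N2 \<inter> T = {}" by blast
    obtain M where M: "M \<in> P" "M \<noteq> N1" "avgS S N1 M > avgS S N1 N2"
      using key[OF fX Ctp st T(1) T(2) ne(1) ne(2) sub(2) T(3) N(1) Pp lamP] by blast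
    have "avgS S N1 M \<le> avgS S N1 N2" using mx N(1) M(1) M(2) by metis
    then show False using M(3) by simp
  next
    assume "\<exists>T\<in>Ct. N2 \<subset> T \<and> N1 \<inter> T = {}"
    then obtain T where T: "T \<in> Ct" "N2 \<subset> T" "N1 \<inter> T = {}" by blast
    obtain M where M: "M \<in> P" "M \<noteq> N2" "avgS S N2 M > avgS S N2 N1"
      using key[OF fX Ctp st T(1) T(2) ne(2) ne(1) sub(1) T(3) N(2) Pp lamP] by blast
    have "avgS S N2 M \<le> avgS S N1 N2" using mx N(2) M(1) M(2) by metis
    moreover have "avgS S N2 N1 = avgS S N1 N2" by (rule avgS_sym[OF sym sub(2) sub(1)])
    ultimately show False using M(3) by simp
  qed
qed


lemma part_merge:
  assumes Pp: "is_partition X P" and N: "N1 \<in> P" "N2 \<in> P" "N1 \<noteq> N2"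
  shows "is_partition X (insert (N1 \<union> N2) (P - {N1, N2}))"
proof -
  have U: "\<Union>P = X" and E: "{} \<notin> P" and D: "\<forall>A\<in>P. \<forall>B\<in>P. A \<noteq> B \<longrightarrow> A \<inter> B = {}"
    using Pp unfolding is_partition_def by auto
  have "\<Union>(insert (N1 \<union> N2) (P - {N1, N2})) = \<Union>P" using N by blast
  moreover have "{} \<notin> insert (N1 \<union> N2) (P - {N1, N2})" using E N by auto
  moreover have "\<forall>A\<in>insert (N1 \<union> N2) (P - {N1, N2}). \<forall>B\<in>insert (N1 \<union> N2) (P - {N1, N2}). A \<noteq> B \<longrightarrow> A \<inter> B = {}"
  proof (intro ballI impI)
    fix A B assume A: "A \<in> insert (N1 \<union> N2) (P - {N1, N2})" and B: "B \<in> insert (N1 \<union> N2) (P - {N1, N2})" and AB: "A \<noteq> B"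
    show "A \<inter> B = {}"
    proof (cases "A = N1 \<union> N2")
      case True
      then have "B \<in> P" "B \<noteq> N1" "B \<noteq> N2" using B AB by auto
      then have "B \<inter> N1 = {}" "B \<inter> N2 = {}" using D N by auto
      then show ?thesis using True by blast
    next
      case False
      then have A': "A \<in> P" "A \<noteq> N1" "A \<noteq> N2" using A by auto
      then have "A \<inter> N1 = {}" "A \<inter> N2 = {}" using D N by auto
      show ?thesis
      proof (cases "B = N1 \<union> N2")
        case True
        then show ?thesis using \<open>A \<inter> N1 = {}\<close> \<open>A \<inter> N2 = {}\<close> by blast
      next
        case False
        then have "B \<in> P" using B by auto
        then show ?thesis using D A'(1) AB by blast
      qed
    qed
  qed
  ultimately show ?thesis unfolding is_partition_def using U by simp
qed

lemma run_inv:
  assumes fX: "finite X" and sym: "\<forall>x\<in>X. \<forall>y\<in>X. S x y = S y x"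
    and Ctp: "is_partition X Ct" and st: "stable S Ct"
  shows "avl_run S P ms Q \<Longrightarrow> is_partition X P \<Longrightarrow> \<forall>A\<in>P. lam Ct A \<Longrightarrow> P \<subseteq> K \<Longrightarrow>
    \<forall>p\<in>set ms. fst p \<noteq> {} \<and> snd p \<noteq> {} \<and> fst p \<inter> snd p = {} \<and> lam Ct (fst p) \<and> lam Ct (snd p)
      \<and> lam Ct (fst p \<union> snd p) \<and> fst p \<union> snd p \<subseteq> X
      \<and> fst p \<in> K \<union> (\<lambda>(A, B). A \<union> B) ` set ms \<and> snd p \<in> K \<union> (\<lambda>(A, B). A \<union> B) ` set ms"
proof (induction ms arbitrary: P K)
  case Nil
  then show ?case by simp
next
  case (Cons a ms)
  obtain N1 N2 where a: "a = (N1, N2)" by (cases a)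
  have mo: "avl_merge_ok S P N1 N2" and run: "avl_run S (insert (N1 \<union> N2) (P - {N1, N2})) ms Q"
    using Cons.prems(1) a by auto
  have N: "N1 \<in> P" "N2 \<in> P" "N1 \<noteq> N2" using mo unfolding avl_merge_ok_def by auto
  have Pp: "is_partition X P" and lamP: "\<forall>A\<in>P. lam Ct A" and PK: "P \<subseteq> K" using Cons.prems by auto
  have ne: "N1 \<noteq> {}" "N2 \<noteq> {}" using part_ne[OF Pp] N by auto
  have sub: "N1 \<subseteq> X" "N2 \<subseteq> X" using part_sub[OF Pp] N by auto
  have d: "N1 \<inter> N2 = {}" using part_eq[OF Pp N(1) N(2)] N(3) by blast
  have l: "lam Ct N1" "lam Ct N2" using lamP N by auto
  have lU: "lam Ct (N1 \<union> N2)" by (rule merge_lam[OF fX sym Ctp st mo Pp lamP])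
  have Pp': "is_partition X (insert (N1 \<union> N2) (P - {N1, N2}))" by (rule part_merge[OF Pp N])
  have lamP': "\<forall>A\<in>insert (N1 \<union> N2) (P - {N1, N2}). lam Ct A" using lamP lU by auto
  have PK': "insert (N1 \<union> N2) (P - {N1, N2}) \<subseteq> K \<union> {N1 \<union> N2}" using PK by auto
  have IH: "\<forall>p\<in>set ms. fst p \<noteq> {} \<and> snd p \<noteq> {} \<and> fst p \<inter> snd p = {} \<and> lam Ct (fst p) \<and> lam Ct (snd p)
      \<and> lam Ct (fst p \<union> snd p) \<and> fst p \<union> snd p \<subseteq> X
      \<and> fst p \<in> (K \<union> {N1 \<union> N2}) \<union> (\<lambda>(A, B). A \<union> B) ` set ms \<and> snd p \<in> (K \<union> {N1 \<union> N2}) \<union> (\<lambda>(A, B). A \<union> B) ` set ms"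
    by (rule Cons.IH[OF run Pp' lamP' PK'])
  have incl: "(K \<union> {N1 \<union> N2}) \<union> (\<lambda>(A, B). A \<union> B) ` set ms \<subseteq> K \<union> (\<lambda>(A, B). A \<union> B) ` set (a # ms)"
    using a by auto
  show ?case
  proof
    fix p assume p: "p \<in> set (a # ms)"
    show "fst p \<noteq> {} \<and> snd p \<noteq> {} \<and> fst p \<inter> snd p = {} \<and> lam Ct (fst p) \<and> lam Ct (snd p)
      \<and> lam Ct (fst p \<union> snd p) \<and> fst p \<union> snd p \<subseteq> X
      \<and> fst p \<in> K \<union> (\<lambda>(A, B). A \<union> B) ` set (a # ms) \<and> snd p \<in> K \<union> (\<lambda>(A, B). A \<union> B) ` set (a # ms)"
    proof (cases "p = a")
      case True
      have "N1 \<in> K" "N2 \<in> K" using N PK by auto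
      then show ?thesis unfolding True a using ne d l lU sub by simp
    next
      case False
      then have "p \<in> set ms" using p by simp
      then have H: "fst p \<noteq> {} \<and> snd p \<noteq> {} \<and> fst p \<inter> snd p = {} \<and> lam Ct (fst p) \<and> lam Ct (snd p)
      \<and> lam Ct (fst p \<union> snd p) \<and> fst p \<union> snd p \<subseteq> X
      \<and> fst p \<in> (K \<union> {N1 \<union> N2}) \<union> (\<lambda>(A, B). A \<union> B) ` set ms \<and> snd p \<in> (K \<union> {N1 \<union> N2}) \<union> (\<lambda>(A, B). A \<union> B) ` set ms"
        by (rule bspec[OF IH])
      then show ?thesis using subsetD[OF incl] by (elim conjE) (intro conjI; assumption?; blast)
    qed
  qed
qed


lemma depth_lt:
  assumes fin: "finite (tree_nodes X ms)" and M: "M \<in> tree_nodes X ms" and N: "N \<in> tree_nodes X ms"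
    and MN: "M \<subset> N"
  shows "tree_depth X ms N < tree_depth X ms M"
proof -
  have "{K \<in> tree_nodes X ms. N \<subset> K} \<subset> {K \<in> tree_nodes X ms. M \<subset> K}"
  proof
    show "{K \<in> tree_nodes X ms. N \<subset> K} \<subseteq> {K \<in> tree_nodes X ms. M \<subset> K}" using MN by auto
    have "N \<in> {K \<in> tree_nodes X ms. M \<subset> K}" using N MN by simp
    moreover have "N \<notin> {K \<in> tree_nodes X ms. N \<subset> K}" by simp
    ultimately show "{K \<in> tree_nodes X ms. N \<subset> K} \<noteq> {K \<in> tree_nodes X ms. M \<subset> K}" by blast
  qed
  moreover have "finite {K \<in> tree_nodes X ms. M \<subset> K}" using fin by simp
  ultimately show ?thesis unfolding tree_depth_def by (rule psubset_card_mono[rotated])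
qed

lemma split_clean:
  assumes Ctp: "is_partition X Ct"
    and TN: "\<forall>N\<in>tree_nodes X ms. N \<noteq> {} \<and> N \<subseteq> X \<and> lam Ct N"
    and TC: "\<forall>p\<in>set ms. fst p \<in> tree_nodes X ms \<and> snd p \<in> tree_nodes X ms \<and> fst p \<inter> snd p = {}"
    and fin: "finite (tree_nodes X ms)"
    and sp: "split_step X ms Ct Cs Pu C N1 N2 Cs' Pu'"
  shows "clean_split Ct C (C \<inter> N1) (C \<inter> N2)"
proof -
  obtain T1 T2 where T12: "T1 \<in> Ct" "T2 \<in> Ct" "T1 \<noteq> T2" "T1 \<inter> C \<noteq> {}" "T2 \<inter> C \<noteq> {}"
    using sp unfolding split_step_def by blast
  obtain N where dn: "deepest_node_containing X ms C N" and tc: "tree_children ms N N1 N2"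
    using sp unfolding split_step_def by blast
  have Nn: "N \<in> tree_nodes X ms" and CN: "C \<subseteq> N"
    and mx: "\<forall>M\<in>tree_nodes X ms. C \<subseteq> M \<longrightarrow> tree_depth X ms M \<le> tree_depth X ms N"
    using dn unfolding deepest_node_containing_def by auto
  have pm: "(N1, N2) \<in> set ms" and NU: "N1 \<union> N2 = N" using tc unfolding tree_children_def by auto
  have N12: "N1 \<in> tree_nodes X ms" "N2 \<in> tree_nodes X ms" "N1 \<inter> N2 = {}" using bspec[OF TC pm] by auto
  have ne: "N1 \<noteq> {}" "N2 \<noteq> {}" using TN N12 by auto
  have l: "lam Ct N1" "lam Ct N2" "lam Ct N" using TN N12 Nn by auto
  have c1: "C \<inter> N1 \<noteq> {}"
  proof
    assume "C \<inter> N1 = {}"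
    then have CN2: "C \<subseteq> N2" using CN NU by blast
    have "N2 \<subset> N" using NU N12(3) ne(1) by blast
    then have "tree_depth X ms N < tree_depth X ms N2" by (rule depth_lt[OF fin N12(2) Nn])
    moreover have "tree_depth X ms N2 \<le> tree_depth X ms N" using mx N12(2) CN2 by blast
    ultimately show False by simp
  qed
  have c2: "C \<inter> N2 \<noteq> {}"
  proof
    assume "C \<inter> N2 = {}"
    then have CN1: "C \<subseteq> N1" using CN NU by blast
    have "N1 \<subset> N" using NU N12(3) ne(2) by blast
    then have "tree_depth X ms N < tree_depth X ms N1" by (rule depth_lt[OF fin N12(1) Nn])
    moreover have "tree_depth X ms N1 \<le> tree_depth X ms N" using mx N12(1) CN1 by blast
    ultimately show False by simp
  qed
  have notin: "\<not> N \<subseteq> T'" if "T' \<in> Ct" for T'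
  proof
    assume NT: "N \<subseteq> T'"
    have "T1 \<inter> T' \<noteq> {}" using T12(4) CN NT by blast
    then have "T1 = T'" by (rule part_eq[OF Ctp T12(1) that])
    moreover have "T2 \<inter> T' \<noteq> {}" using T12(5) CN NT by blast
    then have "T2 = T'" by (rule part_eq[OF Ctp T12(2) that])
    ultimately show False using T12(3) by simp
  qed
  have satN: "\<forall>T\<in>Ct. T \<inter> N \<noteq> {} \<longrightarrow> T \<subseteq> N" using l(3) notin unfolding lam_def by blast
  have "\<forall>T\<in>Ct. T \<inter> C \<noteq> {} \<longrightarrow> T \<inter> C = T \<inter> (C \<inter> N1) \<or> T \<inter> C = T \<inter> (C \<inter> N2)"
  proof (intro ballI impI)
    fix T assume T: "T \<in> Ct" and TC': "T \<inter> C \<noteq> {}"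
    have TN': "T \<subseteq> N" using satN T TC' CN by blast
    show "T \<inter> C = T \<inter> (C \<inter> N1) \<or> T \<inter> C = T \<inter> (C \<inter> N2)"
    proof (cases "T \<subseteq> N1")
      case True
      then show ?thesis by blast
    next
      case F1: False
      show ?thesis
      proof (cases "T \<subseteq> N2")
        case True
        then show ?thesis by blast
      next
        case F2: False
        have m2: "T \<inter> N2 \<noteq> {}" using F1 TN' NU by blast
        have m1: "T \<inter> N1 \<noteq> {}" using F2 TN' NU by blast
        have "N1 \<subseteq> T" by (rule lam_meet[OF l(1) Ctp T m1 F1])
        moreover have "N2 \<subseteq> T" by (rule lam_meet[OF l(2) Ctp T m2 F2])
        ultimately have "N \<subseteq> T" using NU by blast
        then show ?thesis using notin T by blast
      qed
    qed
  qed
  then show ?thesis unfolding clean_split_def using c1 c2 by blast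
qed


lemma clu:
  assumes Ctp: "is_partition X Ct" and T: "T \<in> Ct" and fC: "finite C" and Cne: "C \<noteq> {}"
    and eta: "\<eta> > 1/2" and CT: "real (card (C \<inter> T)) \<ge> \<eta> * real (card C)"
    and NC: "real (card (N \<inter> C)) \<ge> (if C \<in> Pu then 1 else \<eta>) * real (card C)"
    and pu: "C \<in> Pu \<longrightarrow> (\<exists>T0\<in>Ct. C \<subseteq> T0)"
  shows "N \<inter> C \<noteq> {}" "N \<inter> T \<noteq> {}"
    "\<And>A. T \<subseteq> A \<Longrightarrow> real (card (A \<inter> C)) \<ge> (if C \<in> Pu then 1 else \<eta>) * real (card C)"
proof -
  have cpos: "real (card C) > 0" using fC Cne by (simp add: card_gt_0_iff)
  have h1: "real (card (N \<inter> C)) > real (card C) / 2"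
  proof (cases "C \<in> Pu")
    case True
    then show ?thesis using NC cpos by simp
  next
    case False
    then have "real (card (N \<inter> C)) \<ge> \<eta> * real (card C)" using NC by simp
    moreover have "\<eta> * real (card C) > real (card C) / 2" using eta cpos by simp
    ultimately show ?thesis by linarith
  qed
  have h2: "real (card (C \<inter> T)) > real (card C) / 2"
  proof -
    have "\<eta> * real (card C) > real (card C) / 2" using eta cpos by simp
    then show ?thesis using CT by linarith
  qed
  have mt: "(N \<inter> C) \<inter> (C \<inter> T) \<noteq> {}"
  proof
    assume d: "(N \<inter> C) \<inter> (C \<inter> T) = {}"
    have "card ((N \<inter> C) \<union> (C \<inter> T)) = card (N \<inter> C) + card (C \<inter> T)"
      by (rule card_Un_disjoint) (use fC d in auto)
    moreover have "card ((N \<inter> C) \<union> (C \<inter> T)) \<le> card C" by (rule card_mono[OF fC]) auto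
    ultimately have "real (card (N \<inter> C)) + real (card (C \<inter> T)) \<le> real (card C)" by linarith
    then show False using h1 h2 by linarith
  qed
  then show "N \<inter> C \<noteq> {}" "N \<inter> T \<noteq> {}" by auto
  fix A assume TA: "T \<subseteq> A"
  show "real (card (A \<inter> C)) \<ge> (if C \<in> Pu then 1 else \<eta>) * real (card C)"
  proof (cases "C \<in> Pu")
    case True
    then obtain T0 where T0: "T0 \<in> Ct" "C \<subseteq> T0" using pu by blast
    have "T0 \<inter> T \<noteq> {}" using mt T0(2) by blast
    then have "T0 = T" by (rule part_eq[OF Ctp T0(1) T])
    then have "A \<inter> C = C" using T0(2) TA by blast
    then show ?thesis using True by simp
  next
    case False
    have "card (C \<inter> T) \<le> card (A \<inter> C)" by (rule card_mono) (use fC TA in auto)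
    then show ?thesis using False CT by simp
  qed
qed

lemma merge_pure:
  assumes Ctp: "is_partition X Ct" and fX: "finite X" and eta: "\<eta> > 1/2"
    and TN: "\<forall>N\<in>tree_nodes X ms. N \<noteq> {} \<and> N \<subseteq> X \<and> lam Ct N"
    and TC: "\<forall>p\<in>set ms. fst p \<in> tree_nodes X ms \<and> snd p \<in> tree_nodes X ms \<and> fst p \<inter> snd p = {}"
    and TS: "\<forall>N\<in>tree_nodes X ms. (\<exists>T\<in>Ct. N \<subseteq> T) \<or> (\<exists>p\<in>set ms. fst p \<union> snd p = N)"
    and fin: "finite (tree_nodes X ms)"
    and Csp: "is_partition X Cs" and pu: "\<forall>C\<in>Pu. \<exists>T\<in>Ct. C \<subseteq> T"
    and mg: "merge_step X ms Ct \<eta> Cs Pu Ci Cj N Cs' Pu'"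
  shows "N \<inter> (Ci \<union> Cj) \<noteq> {} \<and> (\<exists>T\<in>Ct. N \<inter> (Ci \<union> Cj) \<subseteq> T)"
proof -
  have C: "Ci \<in> Cs" "Cj \<in> Cs" and ok: "merge_node_ok X ms \<eta> Pu Ci Cj N"
    and mx: "\<forall>M. merge_node_ok X ms \<eta> Pu Ci Cj M \<longrightarrow> tree_depth X ms M \<le> tree_depth X ms N"
    using mg unfolding merge_step_def by auto
  obtain T where T: "T \<in> Ct" "real (card (Ci \<inter> T)) \<ge> \<eta> * real (card Ci)"
      "real (card (Cj \<inter> T)) \<ge> \<eta> * real (card Cj)"
    using mg unfolding merge_step_def by blast
  have Nn: "N \<in> tree_nodes X ms"
    and oki: "real (card (N \<inter> Ci)) \<ge> (if Ci \<in> Pu then 1 else \<eta>) * real (card Ci)"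
    and okj: "real (card (N \<inter> Cj)) \<ge> (if Cj \<in> Pu then 1 else \<eta>) * real (card Cj)"
    using ok unfolding merge_node_ok_def by auto
  have fi: "finite Ci" "finite Cj" using part_sub[OF Csp C(1)] part_sub[OF Csp C(2)] fX finite_subset by auto
  have nei: "Ci \<noteq> {}" "Cj \<noteq> {}" using part_ne[OF Csp] C by auto
  have pi: "Ci \<in> Pu \<longrightarrow> (\<exists>T0\<in>Ct. Ci \<subseteq> T0)" "Cj \<in> Pu \<longrightarrow> (\<exists>T0\<in>Ct. Cj \<subseteq> T0)" using pu by auto
  note ci = clu[OF Ctp T(1) fi(1) nei(1) eta T(2) oki pi(1)]
  note cj = clu[OF Ctp T(1) fi(2) nei(2) eta T(3) okj pi(2)]
  have ne: "N \<inter> (Ci \<union> Cj) \<noteq> {}" using ci(1) by blast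
  have lN: "lam Ct N" using TN Nn by blast
  have "\<exists>T'\<in>Ct. N \<subseteq> T'"
  proof (rule ccontr)
    assume nin: "\<not> (\<exists>T'\<in>Ct. N \<subseteq> T')"
    then have sat: "\<forall>T'\<in>Ct. T' \<inter> N \<noteq> {} \<longrightarrow> T' \<subseteq> N" using lN unfolding lam_def by blast
    have TN': "T \<subseteq> N" using sat T(1) ci(2) by blast
    obtain p where p: "p \<in> set ms" "fst p \<union> snd p = N" using TS Nn nin by blast
    define A where "A = fst p"
    define B where "B = snd p"
    have AB: "A \<in> tree_nodes X ms" "B \<in> tree_nodes X ms" "A \<inter> B = {}" "A \<union> B = N"
      using bspec[OF TC p(1)] p(2) unfolding A_def B_def by auto
    have neAB: "A \<noteq> {}" "B \<noteq> {}" using TN AB by auto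
    have lAB: "lam Ct A" "lam Ct B" using TN AB by auto
    have child_bad: "False" if Q: "Q \<in> tree_nodes X ms" "Q \<subset> N" "T \<subseteq> Q" for Q
    proof -
      have "merge_node_ok X ms \<eta> Pu Ci Cj Q"
        unfolding merge_node_ok_def using Q(1) ci(3)[OF Q(3)] cj(3)[OF Q(3)] by blast
      then have "tree_depth X ms Q \<le> tree_depth X ms N" using mx by blast
      moreover have "tree_depth X ms N < tree_depth X ms Q" by (rule depth_lt[OF fin Q(1) Nn Q(2)])
      ultimately show False by simp
    qed
    show False
    proof (cases "T \<subseteq> A")
      case True
      have "A \<subset> N" using AB neAB by blast
      then show False using child_bad[OF AB(1) _ True] by blast
    next
      case F1: False
      show False
      proof (cases "T \<subseteq> B")
        case True
        have "B \<subset> N" using AB neAB by blast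
        then show False using child_bad[OF AB(2) _ True] by blast
      next
        case F2: False
        have m2: "T \<inter> B \<noteq> {}" using F1 TN' AB(4) by blast
        have m1: "T \<inter> A \<noteq> {}" using F2 TN' AB(4) by blast
        have "A \<subseteq> T" by (rule lam_meet[OF lAB(1) Ctp T(1) m1 F1])
        moreover have "B \<subseteq> T" by (rule lam_meet[OF lAB(2) Ctp T(1) m2 F2])
        ultimately have "N \<subseteq> T" using AB(4) by blast
        then show False using nin T(1) by blast
      qed
    qed
  qed
  then show ?thesis using ne by blast
qed


lemma refine:
  assumes Pp: "is_partition X P" and QP: "Q \<subseteq> P" and Rne: "{} \<notin> R"
    and Rd: "\<forall>A\<in>R. \<forall>B\<in>R. A \<noteq> B \<longrightarrow> A \<inter> B = {}" and RU: "\<Union>R = \<Union>Q"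
  shows "is_partition X ((P - Q) \<union> R)"
proof -
  have U: "\<Union>P = X" and E: "{} \<notin> P" and D: "\<forall>A\<in>P. \<forall>B\<in>P. A \<noteq> B \<longrightarrow> A \<inter> B = {}"
    using Pp unfolding is_partition_def by auto
  have "\<Union>((P - Q) \<union> R) = \<Union>(P - Q) \<union> \<Union>R" by (rule Union_Un_distrib)
  also have "\<dots> = \<Union>(P - Q) \<union> \<Union>Q" using RU by simp
  also have "\<dots> = \<Union>((P - Q) \<union> Q)" by (rule Union_Un_distrib[symmetric])
  also have "(P - Q) \<union> Q = P" using QP by blast
  finally have "\<Union>((P - Q) \<union> R) = \<Union>P" .
  moreover have "{} \<notin> (P - Q) \<union> R" using E Rne by simp
  moreover have "\<forall>A\<in>(P - Q) \<union> R. \<forall>B\<in>(P - Q) \<union> R. A \<noteq> B \<longrightarrow> A \<inter> B = {}"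
  proof (intro ballI impI)
    fix A B assume A: "A \<in> (P - Q) \<union> R" and B: "B \<in> (P - Q) \<union> R" and AB: "A \<noteq> B"
    have cross: "A' \<inter> B' = {}" if "A' \<in> P - Q" "B' \<in> R" for A' B'
    proof -
      have "\<forall>Q'\<in>Q. A' \<inter> Q' = {}"
      proof
        fix Q' assume "Q' \<in> Q"
        then have "Q' \<in> P" "A' \<noteq> Q'" using that(1) QP by auto
        then show "A' \<inter> Q' = {}" using D that(1) by blast
      qed
      moreover have "B' \<subseteq> \<Union>R" using that(2) by (rule Union_upper)
      then have "B' \<subseteq> \<Union>Q" using RU by simp
      ultimately show ?thesis by blast
    qed
    show "A \<inter> B = {}"
    proof (cases "A \<in> R")
      case True
      show ?thesis
      proof (cases "B \<in> R")
        case True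
        then show ?thesis using Rd \<open>A \<in> R\<close> AB by blast
      next
        case False
        then have "B \<in> P - Q" using B by blast
        then show ?thesis using cross \<open>A \<in> R\<close> by blast
      qed
    next
      case False
      then have A': "A \<in> P - Q" using A by blast
      show ?thesis
      proof (cases "B \<in> R")
        case True
        then show ?thesis using cross A' by blast
      next
        case False
        then have "B \<in> P - Q" using B by blast
        then show ?thesis using D A' AB by blast
      qed
    qed
  qed
  ultimately show ?thesis unfolding is_partition_def using U by simp
qed

lemma disj3: "a \<inter> b = {} \<Longrightarrow> a \<inter> c = {} \<Longrightarrow> b \<inter> c = {} \<Longrightarrow>
  \<forall>A\<in>{a, b, c}. \<forall>B\<in>{a, b, c}. A \<noteq> B \<longrightarrow> A \<inter> B = {}"
  by (simp add: Int_commute)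

lemma disj_mono: "\<forall>A\<in>R. \<forall>B\<in>R. A \<noteq> B \<longrightarrow> A \<inter> B = {} \<Longrightarrow> R' \<subseteq> R \<Longrightarrow>
  \<forall>A\<in>R'. \<forall>B\<in>R'. A \<noteq> B \<longrightarrow> A \<inter> B = {}"
  by blast

lemma part_split:
  assumes Pp: "is_partition X Cs" and C: "C \<in> Cs" and CN: "C \<subseteq> N1 \<union> N2" and d: "N1 \<inter> N2 = {}"
    and n1: "C \<inter> N1 \<noteq> {}" and n2: "C \<inter> N2 \<noteq> {}"
  shows "is_partition X (insert (C \<inter> N1) (insert (C \<inter> N2) (Cs - {C})))"
proof -
  have r1: "{} \<notin> {C \<inter> N1, C \<inter> N2}" using n1 n2 by simp
  have "(C \<inter> N1) \<inter> (C \<inter> N2) = {}" using d by blast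
  then have r2: "\<forall>A\<in>{C \<inter> N1, C \<inter> N2}. \<forall>B\<in>{C \<inter> N1, C \<inter> N2}. A \<noteq> B \<longrightarrow> A \<inter> B = {}"
    by (simp add: Int_commute)
  have r3: "\<Union>{C \<inter> N1, C \<inter> N2} = \<Union>{C}" using CN by blast
  have "is_partition X ((Cs - {C}) \<union> {C \<inter> N1, C \<inter> N2})"
    by (rule refine[OF Pp _ r1 r2 r3]) (use C in simp)
  moreover have "(Cs - {C}) \<union> {C \<inter> N1, C \<inter> N2} = insert (C \<inter> N1) (insert (C \<inter> N2) (Cs - {C}))" by blast
  ultimately show ?thesis by simp
qed

lemma part_merge2:
  assumes Pp: "is_partition X Cs" and C: "Ci \<in> Cs" "Cj \<in> Cs" "Ci \<noteq> Cj" and ne: "N \<inter> (Ci \<union> Cj) \<noteq> {}"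
  shows "is_partition X ((Cs - {Ci, Cj}) \<union> ({Ci - N, Cj - N} - {{}}) \<union> {N \<inter> (Ci \<union> Cj)})"
proof -
  have d: "Ci \<inter> Cj = {}" using part_eq[OF Pp C(1) C(2)] C(3) by blast
  let ?R = "({Ci - N, Cj - N} - {{}}) \<union> {N \<inter> (Ci \<union> Cj)}"
  have r1: "{} \<notin> ?R" using ne by blast
  have "(Ci - N) \<inter> (Cj - N) = {}" "(Ci - N) \<inter> (N \<inter> (Ci \<union> Cj)) = {}" "(Cj - N) \<inter> (N \<inter> (Ci \<union> Cj)) = {}"
    using d by blast+
  then have "\<forall>A\<in>{Ci - N, Cj - N, N \<inter> (Ci \<union> Cj)}. \<forall>B\<in>{Ci - N, Cj - N, N \<inter> (Ci \<union> Cj)}. A \<noteq> B \<longrightarrow> A \<inter> B = {}"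
    by (rule disj3)
  moreover have "?R \<subseteq> {Ci - N, Cj - N, N \<inter> (Ci \<union> Cj)}" by blast
  ultimately have r2: "\<forall>A\<in>?R. \<forall>B\<in>?R. A \<noteq> B \<longrightarrow> A \<inter> B = {}" by (rule disj_mono)
  have r3: "\<Union>?R = \<Union>{Ci, Cj}" by blast
  have r4: "{Ci, Cj} \<subseteq> Cs" using C by blast
  have "is_partition X ((Cs - {Ci, Cj}) \<union> ?R)" by (rule refine[OF Pp r4 r1 r2 r3])
  then show ?thesis by (simp add: Un_assoc)
qed


lemma tree_facts:
  assumes fX: "finite X" and sym: "\<forall>x\<in>X. \<forall>y\<in>X. S x y = S y x"
    and Ctp: "is_partition X Ct" and st: "stable S Ct" and avl: "avg_linkage_tree S X ms"
  shows "\<forall>N\<in>tree_nodes X ms. N \<noteq> {} \<and> N \<subseteq> X \<and> lam Ct N"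
    "\<forall>p\<in>set ms. fst p \<in> tree_nodes X ms \<and> snd p \<in> tree_nodes X ms \<and> fst p \<inter> snd p = {}"
    "\<forall>N\<in>tree_nodes X ms. (\<exists>T\<in>Ct. N \<subseteq> T) \<or> (\<exists>p\<in>set ms. fst p \<union> snd p = N)"
    "finite (tree_nodes X ms)"
proof -
  define P0 where "P0 = (\<lambda>x. {x}) ` X"
  have run: "avl_run S P0 ms {X}" using avl unfolding avg_linkage_tree_def P0_def .
  have P0p: "is_partition X P0" unfolding is_partition_def P0_def by auto
  have sg: "\<exists>T\<in>Ct. {x} \<subseteq> T" if "x \<in> X" for x
    using part_cover[OF Ctp that] by auto
  have lamP0: "\<forall>A\<in>P0. lam Ct A"
  proof
    fix A assume "A \<in> P0"
    then obtain x where x: "x \<in> X" "A = {x}" unfolding P0_def by blast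
    show "lam Ct A" unfolding lam_def using sg[OF x(1)] x(2) by blast
  qed
  have R: "\<forall>p\<in>set ms. fst p \<noteq> {} \<and> snd p \<noteq> {} \<and> fst p \<inter> snd p = {} \<and> lam Ct (fst p) \<and> lam Ct (snd p)
      \<and> lam Ct (fst p \<union> snd p) \<and> fst p \<union> snd p \<subseteq> X
      \<and> fst p \<in> P0 \<union> (\<lambda>(A, B). A \<union> B) ` set ms \<and> snd p \<in> P0 \<union> (\<lambda>(A, B). A \<union> B) ` set ms"
    by (rule run_inv[OF fX sym Ctp st run P0p lamP0 subset_refl])
  have TNd: "tree_nodes X ms = P0 \<union> (\<lambda>p. fst p \<union> snd p) ` set ms"
    unfolding tree_nodes_def P0_def by (simp add: case_prod_beta')
  have TNd': "tree_nodes X ms = P0 \<union> (\<lambda>(A, B). A \<union> B) ` set ms"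
    unfolding tree_nodes_def P0_def by simp
  show "\<forall>N\<in>tree_nodes X ms. N \<noteq> {} \<and> N \<subseteq> X \<and> lam Ct N"
  proof
    fix N assume "N \<in> tree_nodes X ms"
    then have "N \<in> P0 \<or> (\<exists>p\<in>set ms. N = fst p \<union> snd p)" unfolding TNd by blast
    then show "N \<noteq> {} \<and> N \<subseteq> X \<and> lam Ct N"
    proof
      assume "N \<in> P0"
      then show ?thesis using lamP0 part_ne[OF P0p] part_sub[OF P0p] by blast
    next
      assume "\<exists>p\<in>set ms. N = fst p \<union> snd p"
      then obtain p where "p \<in> set ms" "N = fst p \<union> snd p" by blast
      then show ?thesis using bspec[OF R \<open>p \<in> set ms\<close>] by auto
    qed
  qed
  show "\<forall>p\<in>set ms. fst p \<in> tree_nodes X ms \<and> snd p \<in> tree_nodes X ms \<and> fst p \<inter> snd p = {}"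
  proof
    fix p assume p: "p \<in> set ms"
    have "fst p \<in> P0 \<union> (\<lambda>(A, B). A \<union> B) ` set ms" "snd p \<in> P0 \<union> (\<lambda>(A, B). A \<union> B) ` set ms"
      "fst p \<inter> snd p = {}" using bspec[OF R p] by auto
    then show "fst p \<in> tree_nodes X ms \<and> snd p \<in> tree_nodes X ms \<and> fst p \<inter> snd p = {}"
      unfolding TNd' by simp
  qed
  show "\<forall>N\<in>tree_nodes X ms. (\<exists>T\<in>Ct. N \<subseteq> T) \<or> (\<exists>p\<in>set ms. fst p \<union> snd p = N)"
  proof
    fix N assume "N \<in> tree_nodes X ms"
    then have "N \<in> P0 \<or> (\<exists>p\<in>set ms. N = fst p \<union> snd p)" unfolding TNd by blast
    then show "(\<exists>T\<in>Ct. N \<subseteq> T) \<or> (\<exists>p\<in>set ms. fst p \<union> snd p = N)"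
    proof
      assume "N \<in> P0"
      then obtain x where "x \<in> X" "N = {x}" unfolding P0_def by blast
      then show ?thesis using sg by blast
    next
      assume "\<exists>p\<in>set ms. N = fst p \<union> snd p"
      then obtain p where "p \<in> set ms" "N = fst p \<union> snd p" by blast
      then show ?thesis by blast
    qed
  qed
  show "finite (tree_nodes X ms)" unfolding tree_nodes_def using fX by simp
qed


lemma inv_step:
  assumes Ctp: "is_partition X Ct" and fX: "finite X" and eta: "\<eta> > 1/2"
    and TN: "\<forall>N\<in>tree_nodes X ms. N \<noteq> {} \<and> N \<subseteq> X \<and> lam Ct N"
    and TC: "\<forall>p\<in>set ms. fst p \<in> tree_nodes X ms \<and> snd p \<in> tree_nodes X ms \<and> fst p \<inter> snd p = {}"
    and TS: "\<forall>N\<in>tree_nodes X ms. (\<exists>T\<in>Ct. N \<subseteq> T) \<or> (\<exists>p\<in>set ms. fst p \<union> snd p = N)"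
    and fin: "finite (tree_nodes X ms)"
    and Csp: "is_partition X Cs" and pu: "\<forall>C\<in>Pu. \<exists>T\<in>Ct. C \<subseteq> T"
    and ps: "proc_step X ms Ct \<eta> (Cs, Pu) (Cs', Pu')"
  shows "is_partition X Cs' \<and> (\<forall>C\<in>Pu'. \<exists>T\<in>Ct. C \<subseteq> T)"
  using ps unfolding proc_step_def fst_conv snd_conv
proof
  assume "\<exists>C N1 N2. split_step X ms Ct Cs Pu C N1 N2 Cs' Pu'"
  then obtain C N1 N2 where sp: "split_step X ms Ct Cs Pu C N1 N2 Cs' Pu'" by blast
  have cl: "clean_split Ct C (C \<inter> N1) (C \<inter> N2)" by (rule split_clean[OF Ctp TN TC fin sp])
  obtain N where dn: "deepest_node_containing X ms C N" and tc: "tree_children ms N N1 N2"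
    and C: "C \<in> Cs" and Cs': "Cs' = insert (C \<inter> N1) (insert (C \<inter> N2) (Cs - {C}))"
    and Pu': "Pu' = Pu - {C, C \<inter> N1, C \<inter> N2}"
    using sp unfolding split_step_def by blast
  have CN: "C \<subseteq> N" using dn unfolding deepest_node_containing_def by blast
  have pm: "(N1, N2) \<in> set ms" and NU: "N1 \<union> N2 = N" using tc unfolding tree_children_def by auto
  have d: "N1 \<inter> N2 = {}" using bspec[OF TC pm] by simp
  have "is_partition X Cs'" unfolding Cs'
    by (rule part_split[OF Csp C]) (use CN NU d cl in \<open>auto simp: clean_split_def\<close>)
  moreover have "\<forall>C\<in>Pu'. \<exists>T\<in>Ct. C \<subseteq> T" using pu unfolding Pu' by blast
  ultimately show ?thesis by blast
next
  assume "\<exists>Ci Cj N. merge_step X ms Ct \<eta> Cs Pu Ci Cj N Cs' Pu'"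
  then obtain Ci Cj N where mg: "merge_step X ms Ct \<eta> Cs Pu Ci Cj N Cs' Pu'" by blast
  have mp: "N \<inter> (Ci \<union> Cj) \<noteq> {} \<and> (\<exists>T\<in>Ct. N \<inter> (Ci \<union> Cj) \<subseteq> T)"
    by (rule merge_pure[OF Ctp fX eta TN TC TS fin Csp pu mg])
  have C: "Ci \<in> Cs" "Cj \<in> Cs" "Ci \<noteq> Cj"
    and Cs': "Cs' = (Cs - {Ci, Cj}) \<union> ({Ci - N, Cj - N} - {{}}) \<union> {N \<inter> (Ci \<union> Cj)}"
    and Pu': "Pu' = (Pu - {Ci, Cj}) \<union>
           {D. D \<noteq> {} \<and> ((D = Ci - N \<and> Ci \<in> Pu) \<or> (D = Cj - N \<and> Cj \<in> Pu))} \<union>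
           {N \<inter> (Ci \<union> Cj)}"
    using mg unfolding merge_step_def by auto
  have "is_partition X Cs'" unfolding Cs' using part_merge2[OF Csp C] mp by blast
  moreover have "\<forall>D\<in>Pu'. \<exists>T\<in>Ct. D \<subseteq> T"
  proof
    fix D assume "D \<in> Pu'"
    then consider "D \<in> Pu" | "D = Ci - N" "Ci \<in> Pu" | "D = Cj - N" "Cj \<in> Pu" | "D = N \<inter> (Ci \<union> Cj)"
      unfolding Pu' by blast
    then show "\<exists>T\<in>Ct. D \<subseteq> T"
    proof cases
      case 1 then show ?thesis using pu by blast
    next
      case 2
      then obtain T where "T \<in> Ct" "Ci \<subseteq> T" using pu by blast
      then show ?thesis using 2 by blast
    next
      case 3
      then obtain T where "T \<in> Ct" "Cj \<subseteq> T" using pu by blast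
      then show ?thesis using 3 by blast
    next
      case 4 then show ?thesis using mp by blast
    qed
  qed
  ultimately show ?thesis by blast
qed

theorem lemma13:
  fixes X :: "'a set" and S :: "'a \<Rightarrow> 'a \<Rightarrow> real" and Ct :: "'a set set" and \<eta> :: real
    and ms :: "('a set \<times> 'a set) list" and Cs0 Cs Pu :: "'a set set"
  assumes "finite X"
    and "\<forall>x\<in>X. \<forall>y\<in>X. S x y = S y x"
    and "is_partition X Ct"
    and "stable S Ct"
    and "\<eta> > 1/2"
    and "avg_linkage_tree S X ms"
    and "is_partition X Cs0"
    and "(proc_step X ms Ct \<eta>)\<^sup>*\<^sup>* (Cs0, {}) (Cs, Pu)"
  shows "(\<forall>C N1 N2 Cs' Pu'. split_step X ms Ct Cs Pu C N1 N2 Cs' Pu' \<longrightarrow>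
            clean_split Ct C (C \<inter> N1) (C \<inter> N2))
       \<and> (\<forall>Ci Cj N Cs' Pu'. merge_step X ms Ct \<eta> Cs Pu Ci Cj N Cs' Pu' \<longrightarrow>
            N \<inter> (Ci \<union> Cj) \<noteq> {} \<and> (\<exists>T\<in>Ct. N \<inter> (Ci \<union> Cj) \<subseteq> T))"
proof -
  note tf = tree_facts[OF assms(1,2,3,4,6)]
  have inv: "is_partition X (fst st) \<and> (\<forall>C\<in>snd st. \<exists>T\<in>Ct. C \<subseteq> T)"
    if "(proc_step X ms Ct \<eta>)\<^sup>*\<^sup>* (Cs0, {}) st" for st
    using that
  proof (induction rule: rtranclp_induct)
    case base
    then show ?case using assms(7) by simp
  next
    case (step y z)
    obtain a b where y: "y = (a, b)" by (cases y)
    obtain c d where z: "z = (c, d)" by (cases z)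
    have "is_partition X c \<and> (\<forall>C\<in>d. \<exists>T\<in>Ct. C \<subseteq> T)"
      by (rule inv_step[OF assms(3,1,5) tf]) (use step y z in auto)
    then show ?case using z by simp
  qed
  from inv[OF assms(8)] have Csp: "is_partition X Cs" and pu: "\<forall>C\<in>Pu. \<exists>T\<in>Ct. C \<subseteq> T" by auto
  show ?thesis
  proof (intro conjI allI impI)
    fix C N1 N2 Cs' Pu' assume "split_step X ms Ct Cs Pu C N1 N2 Cs' Pu'"
    then show "clean_split Ct C (C \<inter> N1) (C \<inter> N2)" by (rule split_clean[OF assms(3) tf(1,2,4)])
  next
    fix Ci Cj N Cs' Pu' assume "merge_step X ms Ct \<eta> Cs Pu Ci Cj N Cs' Pu'"
    then have "N \<inter> (Ci \<union> Cj) \<noteq> {} \<and> (\<exists>T\<in>Ct. N \<inter> (Ci \<union> Cj) \<subseteq> T)"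
      by (rule merge_pure[OF assms(3,1,5) tf Csp pu])
    then show "N \<inter> (Ci \<union> Cj) \<noteq> {}" "\<exists>T\<in>Ct. N \<inter> (Ci \<union> Cj) \<subseteq> T" by auto
  qed
qed

end
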